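(* For every integer $b\geq 1$, $$\sum_{n\geq 1}\frac{H_n}{(2n+1)^{4b-1}}=-2\lambda(4b-1)\ln 2+\Big(2b-\frac12\Big)\lambda(4b)-2\sum_{q=1}^{b-1}\lambda(2q+1)\lambda(4b-2q-1),$$ where an empty sum equals $0$.
   Context: $H_n=1+\frac12+\cdots+\frac1n$ is the $n$-th harmonic number. For real $s>1$, $\lambda(s)=\sum_{n\geq 1}\frac{1}{(2n-1)^s}=(1-2^{-s})\zeta(s)$. *)

theory Defs
  imports "HOL-Analysis.Analysis"
begin

definition dirichlet_lambda :: "real \<Rightarrow> real" where
  "dirichlet_lambda s = (\<Sum>n. 1 / (2 * real n + 1) powr s)"

end

theory Submission
  imports Defs "HOL-Real_Asymp.Real_Asymp"
begin

definition od :: "nat \<Rightarrow> real" where "od n = 2 * real n + 1"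

lemma od_pos[simp]: "od n > 0" and od_ge1: "od n \<ge> 1" and od_nz[simp]: "od n \<noteq> 0" and od_abs[simp]: "\<bar>od n\<bar> = od n" and od_nonneg[simp]: "0 \<le> od n"
  by (auto simp: od_def)

lemma od_summable_powr:
  assumes "a > 1"
  shows "summable (\<lambda>n. od n powr (-a))"
proof -
  have s: "summable (\<lambda>n. real n powr (-a))" using assms by (subst summable_real_powr_iff) auto
  show ?thesis
  proof (rule summable_comparison_test'[OF s, of 1])
    fix n :: nat assume "n \<ge> 1"
    then have "real n \<le> od n" "real n > 0" by (auto simp: od_def)
    then show "norm (od n powr (-a)) \<le> real n powr (-a)"
      using assms by (auto intro!: powr_mono2')
  qed
qed

lemma od_pow_eq: "1 / od n ^ m = od n powr (- real m)"
  by (simp add: powr_minus powr_realpow divide_inverse)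

lemma lam_summable: "m \<ge> 2 \<Longrightarrow> summable (\<lambda>n. 1 / od n ^ m)"
  using od_summable_powr[of "real m"] by (simp add: od_pow_eq)

lemma lam_sums: "m \<ge> 2 \<Longrightarrow> (\<lambda>n. 1 / od n ^ m) sums dirichlet_lambda (real m)"
proof -
  assume m: "m \<ge> 2"
  have "dirichlet_lambda (real m) = (\<Sum>n. 1 / od n ^ m)"
    unfolding dirichlet_lambda_def
    by (simp add: od_def powr_realpow add_pos_pos)
  then show ?thesis using lam_summable[OF m] by (simp add: summable_sums)
qed

lemma lam_has_sum: "m \<ge> 2 \<Longrightarrow> ((\<lambda>n. 1 / od n ^ m) has_sum dirichlet_lambda (real m)) UNIV"
  by (intro norm_summable_imp_has_sum lam_sums) (auto intro: lam_summable simp: power_abs)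

lemma od_powr32_summable: "(\<lambda>n. 1 / (od n * sqrt (od n))) summable_on UNIV"
proof -
  have eq: "1 / (od n * sqrt (od n)) = od n powr (-(3/2))" for n
  proof -
    have "od n powr (3/2) = od n powr (1 + 1/2)" by simp
    also have "\<dots> = od n * sqrt (od n)" by (subst powr_add) (simp add: powr_half_sqrt)
    finally have e: "od n powr (3/2) = od n * sqrt (od n)" .
    have "od n powr (-(3/2)) = inverse (od n powr (3/2))" by (rule powr_minus)
    also have "\<dots> = inverse (od n * sqrt (od n))" by (simp only: e)
    also have "\<dots> = 1 / (od n * sqrt (od n))" by (rule inverse_eq_divide)
    finally show ?thesis by (rule sym)
  qed
  have "summable (\<lambda>n. 1 / (od n * sqrt (od n)))"
    using od_summable_powr[of "3/2"] by (simp add: eq)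
  then show ?thesis
    by (subst summable_on_UNIV_nonneg_real_iff) (auto intro: less_imp_le)
qed

lemma has_sum_sum_fin:
  fixes f :: "'i \<Rightarrow> 'a \<Rightarrow> real"
  assumes "finite I" "\<And>i. i \<in> I \<Longrightarrow> (f i has_sum a i) A"
  shows "((\<lambda>x. \<Sum>i\<in>I. f i x) has_sum (\<Sum>i\<in>I. a i)) A"
  using assms
proof (induction I rule: finite_induct)
  case empty then show ?case by simp
next
  case (insert i I)
  have "(f i has_sum a i) A" using insert.prems by simp
  moreover have "((\<lambda>x. \<Sum>i\<in>I. f i x) has_sum sum a I) A" using insert by simp
  ultimately have "((\<lambda>x. f i x + (\<Sum>i\<in>I. f i x)) has_sum a i + sum a I) A"
    by (rule has_sum_add)
  then show ?case using insert.hyps by simp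
qed

lemma prod_has_sum:
  fixes f g :: "nat \<Rightarrow> real"
  assumes f: "(f has_sum a) UNIV" and g: "(g has_sum b) UNIV"
    and fn: "\<And>x. f x \<ge> 0" and gn: "\<And>x. g x \<ge> 0"
  shows "((\<lambda>(x,y). f x * g y) has_sum (a * b)) UNIV"
proof -
  have rows: "((\<lambda>y. (\<lambda>(x,y). f x * g y) (x, y)) has_sum f x * b) UNIV" for x
    using has_sum_cmult_right[OF g, of "f x"] by simp
  have outer: "((\<lambda>x. f x * b) has_sum a * b) UNIV"
    using has_sum_cmult_left[OF f] by simp
  have summ: "(\<lambda>(x,y). f x * g y) summable_on Sigma UNIV (\<lambda>_. UNIV)"
    by (rule summable_on_SigmaI[OF rows]) (use outer has_sum_imp_summable fn gn in auto)
  have "((\<lambda>(x,y). f x * g y) has_sum (a * b)) (Sigma UNIV (\<lambda>_. UNIV))"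
    by (rule has_sum_SigmaI[OF rows outer summ])
  then show ?thesis by simp
qed

lemma prod_summable:
  fixes f g :: "nat \<Rightarrow> real"
  assumes "f summable_on UNIV" "g summable_on UNIV" "\<And>x. f x \<ge> 0" "\<And>x. g x \<ge> 0"
  shows "(\<lambda>(x,y). f x * g y) summable_on UNIV"
  using prod_has_sum[of f _ g] assms has_sum_imp_summable by (metis has_sum_infsum)

lemma row_has_sum:
  fixes h :: "nat \<Rightarrow> real"
  assumes "h summable_on (-{x})" "(\<lambda>y. if y = x then 0 else h y) sums v"
  shows "(h has_sum v) (-{x})"
proof -
  from assms(1) obtain w where w: "(h has_sum w) (-{x})" by (auto simp: summable_on_def)
  have "((\<lambda>y. if y = x then 0 else h y) has_sum w) UNIV"
    using w by (rule has_sum_cong_neutral[THEN iffD2, rotated -1]) auto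
  then have "(\<lambda>y. if y = x then 0 else h y) sums w" by (rule has_sum_imp_sums)
  with assms(2) have "v = w" using sums_unique2 by blast
  with w show ?thesis by simp
qed

lemma sym_split:
  fixes g F :: "nat \<times> nat \<Rightarrow> real"
  assumes gT: "(g has_sum T) UNIV"
    and gd: "\<And>x. g (x,x) = d x" and dD: "(d has_sum D) UNIV"
    and gF: "\<And>x y. x \<noteq> y \<Longrightarrow> g (x,y) = F (x,y) + F (y,x)"
    and Fs: "F summable_on {(x,y). x \<noteq> y}"
    and rows: "\<And>x. ((\<lambda>y. F (x,y)) has_sum r x) (-{x})"
  shows "(r has_sum ((T - D) / 2)) UNIV"
proof -
  define Off where "Off = {(x::nat,y::nat). x \<noteq> y}"
  define Dg where "Dg = range (\<lambda>x::nat. (x,x))"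
  have gD: "(g has_sum D) Dg"
    unfolding Dg_def by (subst has_sum_reindex) (auto intro: inj_onI simp: o_def gd dD)
  have OD: "UNIV - Dg = Off" by (auto simp: Off_def Dg_def)
  from has_sum_Diff[OF gT gD] have g1: "(g has_sum (T - D)) Off"
    by (simp add: OD)
  from Fs obtain A where FA: "(F has_sum A) Off" by (auto simp: summable_on_def Off_def)
  have bs: "bij_betw (\<lambda>(x,y). (y,x)) Off Off"
    by (rule bij_betwI[of _ _ _ "\<lambda>(x,y). (y,x)"]) (auto simp: Off_def)
  have FA2: "((\<lambda>z. F ((\<lambda>(x,y). (y,x)) z)) has_sum A) Off"
    using has_sum_reindex_bij_betw[OF bs, of F A] FA by simp
  have "((\<lambda>z. F z + F ((\<lambda>(x,y). (y,x)) z)) has_sum (A + A)) Off"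
    by (rule has_sum_add[OF FA FA2])
  moreover have "\<And>z. z \<in> Off \<Longrightarrow> F z + F ((\<lambda>(x,y). (y,x)) z) = g z"
    by (auto simp: Off_def gF)
  ultimately have "(g has_sum (A + A)) Off" using has_sum_cong by (metis (no_types, lifting))
  with g1 have TA: "T - D = A + A" using has_sum_unique by blast
  have "Off = Sigma UNIV (\<lambda>x. -{x})" by (auto simp: Off_def)
  with FA have "(F has_sum A) (Sigma UNIV (\<lambda>x. -{x}))" by simp
  from has_sum_Sigma'[OF this rows] have "(r has_sum A) UNIV" .
  with TA show ?thesis by (simp add: field_simps)
qed

lemma harmC1: "N \<le> x \<Longrightarrow> (\<Sum>y<N. 1 / (real y - real x)) = harm (x - N) - (harm x :: real)"
proof (induction N)
  case 0 then show ?case by simp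
next
  case (Suc N)
  then have IH: "(\<Sum>y<N. 1 / (real y - real x)) = harm (x - N) - (harm x :: real)" by simp
  have e: "x - N = Suc (x - Suc N)" using Suc.prems by simp
  have s: "(\<Sum>y<Suc N. 1 / (real y - real x)) = (\<Sum>y<N. 1 / (real y - real x)) + 1/(real N - real x)"
    by (rule sum.lessThan_Suc)
  have h: "harm (x - N) = harm (x - Suc N) + inverse (real (Suc (x - Suc N)) :: real)"
    by (simp only: e harm_Suc)
  have r: "real N - real x = - real (Suc (x - Suc N))" using Suc.prems by simp
  have i: "1/(real N - real x) = - inverse (real (Suc (x - Suc N)))"
    by (simp only: r inverse_eq_divide divide_minus_right)
  show ?case using s h i IH by linarith
qed

lemma harmC2: "(\<Sum>y<x+1+M. if y = x then 0 else 1 / (real y - real x)) = harm M - (harm x :: real)"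
proof (induction M)
  case 0
  have "(\<Sum>y<x+1+0. if y = x then 0 else 1 / (real y - real x)) = (\<Sum>y<x. 1 / (real y - real x))"
    by simp
  then show ?case using harmC1[of x x] by simp
next
  case (Suc M)
  have "x + 1 + Suc M = Suc (x + 1 + M)" by simp
  then show ?case using Suc by (simp add: harm_Suc inverse_eq_divide)
qed

lemma harmC3: "(\<Sum>y<N. 1 / (real y + real x + 1)) = harm (N + x) - (harm x :: real)"
  by (induction N) (auto simp: harm_Suc inverse_eq_divide add_ac harm_expand(1))

lemma harmC4: "(\<Sum>y<N. 1 / od y) = harm (2*N) - (harm N :: real) / 2"
proof (induction N)
  case 0 then show ?case by (simp add: harm_expand(1))
next
  case (Suc N)
  have e: "2 * Suc N = Suc (Suc (2*N))" by simp
  have h1: "harm (2 * Suc N) = harm (2*N) + 1/(2*real N+1) + (1/(2*real N + 2) :: real)"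
    by (simp add: e harm_Suc inverse_eq_divide add_ac)
  have h2: "harm (Suc N) = harm N + 1/(real N + 1 :: real)"
    by (simp add: harm_Suc inverse_eq_divide add_ac)
  have h3: "1/(2 * real N + 2) = (1/(real N+1))/2" by (simp add: field_simps)
  have s: "(\<Sum>y<Suc N. 1 / od y) = (\<Sum>y<N. 1 / od y) + 1/(2*real N + 1)" by (simp add: od_def)
  have "(\<Sum>y<Suc N. 1 / od y) = harm (2*N) - harm N / 2 + 1/(2*real N + 1)"
    by (simp only: s Suc.IH)
  also have "\<dots> = harm (2 * Suc N) - harm (Suc N) / 2"
    by (simp only: h1 h2 h3 diff_divide_distrib add_divide_distrib)
  finally show ?case .
qed

lemma harm_ln_shift: "(\<lambda>M. harm (M + c) - ln (real (M + c)) :: real) \<longlonglongrightarrow> euler_mascheroni"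
  using LIMSEQ_ignore_initial_segment[OF euler_mascheroni_LIMSEQ, of c] by simp

lemma harm_ln_shift2: "(\<lambda>M. harm (2*M + c) - ln (real (2*M + c)) :: real) \<longlonglongrightarrow> euler_mascheroni"
proof -
  have sm: "strict_mono (\<lambda>M::nat. 2*M + c)" by (auto simp: strict_mono_def)
  show ?thesis using LIMSEQ_subseq_LIMSEQ[OF euler_mascheroni_LIMSEQ sm] by (simp add: o_def)
qed

lemma harm_lim0: "(\<lambda>M. harm M - harm (M + c) :: real) \<longlonglongrightarrow> 0"
proof -
  have l: "(\<lambda>M::nat. ln (real M) - ln (real (M + c))) \<longlonglongrightarrow> 0"
    by real_asymp
  have "(\<lambda>M. (harm M - ln (real M)) - (harm (M + c) - ln (real (M + c))) + (ln (real M) - ln (real (M + c))) :: real)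
        \<longlonglongrightarrow> euler_mascheroni - euler_mascheroni + 0"
    by (intro tendsto_intros euler_mascheroni_LIMSEQ harm_ln_shift l)
  then show ?thesis by simp
qed

lemma harm_limln2: "(\<lambda>M. harm M / 2 + harm (M + c) / 2 - harm (2*M + 2*c) :: real) \<longlonglongrightarrow> - ln 2"
proof -
  have l: "(\<lambda>M::nat. ln (real M) / 2 + ln (real (M + c)) / 2 - ln (real (2*M + 2*c))) \<longlonglongrightarrow> - ln 2"
    by real_asymp
  have "(\<lambda>M. (harm M - ln (real M)) / 2 + (harm (M + c) - ln (real (M + c))) / 2
         - (harm (2*M + 2*c) - ln (real (2*M + 2*c)))
         + (ln (real M) / 2 + ln (real (M + c)) / 2 - ln (real (2*M + 2*c))) :: real)
        \<longlonglongrightarrow> euler_mascheroni / 2 + euler_mascheroni / 2 - euler_mascheroni + - ln 2"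
    by (intro tendsto_intros euler_mascheroni_LIMSEQ harm_ln_shift harm_ln_shift2 l) auto
  moreover have "(\<lambda>M. (harm M - ln (real M)) / 2 + (harm (M + c) - ln (real (M + c))) / 2
         - (harm (2*M + 2*c) - ln (real (2*M + 2*c)))
         + (ln (real M) / 2 + ln (real (M + c)) / 2 - ln (real (2*M + 2*c))) :: real)
       = (\<lambda>M. harm M / 2 + harm (M + c) / 2 - harm (2*M + 2*c))"
    by (rule ext) (simp add: field_simps)
  ultimately show ?thesis by simp
qed

lemma od_alt: "real x + real x + 1 = od x" by (simp add: od_def)

lemma rowB_pt: "x \<noteq> y \<Longrightarrow> 1 / (od y ^ 2 - od x ^ 2) =
   (1 / (4 * od x)) * (1 / (real y - real x) - 1 / (real y + real x + 1))"
proof -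
  assume "x \<noteq> y"
  then have a: "real y - real x \<noteq> 0" by simp
  have b: "real y + real x + 1 \<noteq> 0" by (simp add: add_pos_pos)
  have c: "od y ^ 2 - od x ^ 2 = 4 * (real y - real x) * (real y + real x + 1)"
    unfolding od_def power2_eq_square by (simp add: algebra_simps)
  have d: "od x = real y + real x + 1 - (real y - real x)" by (simp add: od_def)
  have "(1 / (4 * od x)) * (1 / (real y - real x) - 1 / (real y + real x + 1))
     = (1 / (4 * od x)) * (od x / ((real y - real x) * (real y + real x + 1)))"
    using a b by (subst d) (simp add: field_simps)
  also have "\<dots> = 1 / (4 * (real y - real x) * (real y + real x + 1))"
    by simp
  finally show ?thesis by (simp add: c)
qed

lemma rowB_sums: "(\<lambda>y. if y = x then 0 else 1 / (od y ^ 2 - od x ^ 2)) sums (1 / (4 * od x ^ 2))"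
proof -
  define e where "e y = (if y = x then 0 else 1 / (od y ^ 2 - od x ^ 2))" for y
  have e_eq: "e y = (1 / (4 * od x)) * ((if y = x then 0 else 1 / (real y - real x))
              - 1 / (real y + real x + 1) + (if y = x then 1 / od x else 0))" for y
    proof (cases "y = x")
    case True then show ?thesis by (simp add: e_def od_def)
  next
    case False then show ?thesis by (simp add: e_def rowB_pt)
  qed
  have ps: "(\<Sum>y<M + (x+1). e y) = (1 / (4 * od x)) * (harm M - harm (M + (2*x+1)) + 1 / od x)" for M
  proof -
    have "(\<Sum>y<M + (x+1). e y) = (1 / (4 * od x)) * ((\<Sum>y<M + (x+1). if y = x then 0 else 1 / (real y - real x))
          - (\<Sum>y<M + (x+1). 1 / (real y + real x + 1)) + (\<Sum>y<M + (x+1). if y = x then 1 / od x else 0))"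
      by (simp only: e_eq sum_distrib_left[symmetric] sum.distrib sum_subtractf)
    also have "(\<Sum>y<M + (x+1). if y = x then 0 else 1 / (real y - real x)) = harm M - harm x"
      using harmC2[of x M] by (simp add: add_ac)
    also have "(\<Sum>y<M + (x+1). 1 / (real y + real x + 1)) = harm (M + (x+1) + x) - harm x"
      by (rule harmC3)
    also have "(\<Sum>y<M + (x+1). if y = x then 1 / od x else 0) = 1 / od x"
      by (simp add: sum.delta)
    also have "M + (x+1) + x = M + (2*x+1)" by simp
    finally have eq: "(\<Sum>y<M + (x+1). e y) = 1 / (4 * od x) * (harm M - harm x - (harm (M + (2*x+1)) - harm x) + 1 / od x)" .
    show ?thesis by (rule trans[OF eq]) simp
  qed
  have "(\<lambda>M. (1 / (4 * od x)) * (harm M - harm (M + (2*x+1)) + 1 / od x)) \<longlonglongrightarrow> (1 / (4 * od x)) * (0 + 1 / od x)"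
    by (intro tendsto_intros harm_lim0)
  moreover have "(1 / (4 * od x)) * (0 + 1 / od x) = 1 / (4 * od x ^ 2)"
    by (simp add: power2_eq_square)
  ultimately have "(\<lambda>M. \<Sum>y<M + (x+1). e y) \<longlonglongrightarrow> 1 / (4 * od x ^ 2)"
    by (simp only: ps)
  then have "(\<lambda>N. \<Sum>y<N. e y) \<longlonglongrightarrow> 1 / (4 * od x ^ 2)" by (rule LIMSEQ_offset)
  then show ?thesis by (simp add: sums_def e_def)
qed

lemma rowA_pt: "x \<noteq> y \<Longrightarrow> 1 / (od y * (od y - od x)) =
   (1 / od x) * (1/2 * (1 / (real y - real x)) - 1 / od y)"
proof -
  assume "x \<noteq> y"
  then have a: "real y - real x \<noteq> 0" by simp
  have c: "od y - od x = 2 * (real y - real x)" by (simp add: od_def algebra_simps)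
  have "(1 / od x) * (1/2 * (1 / (real y - real x)) - 1 / od y)
      = (1 / od x) * ((od y - 2 * (real y - real x)) / (2 * (real y - real x) * od y))"
    using a by (simp add: field_simps)
  also have "od y - 2 * (real y - real x) = od x" by (simp add: od_def)
  also have "(1 / od x) * (od x / (2 * (real y - real x) * od y)) = 1 / (od y * (od y - od x))"
    by (simp add: c)
  finally show ?thesis by simp
qed

lemma rowA_sums: "(\<lambda>y. if y = x then 0 else 1 / (od y * (od y - od x))) sums
    ((1 / od x) * (- ln 2 - harm x / 2 + 1 / od x))"
proof -
  define e where "e y = (if y = x then 0 else 1 / (od y * (od y - od x)))" for y
  have e_eq: "e y = (1 / od x) * (1/2 * (if y = x then 0 else 1 / (real y - real x))
              - 1 / od y + (if y = x then 1 / od x else 0))" for y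
    by (cases "y = x") (auto simp: e_def rowA_pt)
  have ps: "(\<Sum>y<M + (x+1). e y) = (1 / od x) * ((harm M / 2 + harm (M + (x+1)) / 2 - harm (2*M + 2*(x+1)))
       - harm x / 2 + 1 / od x)" for M
  proof -
    have "(\<Sum>y<M + (x+1). e y) = (1 / od x) * (1/2 * (\<Sum>y<M + (x+1). if y = x then 0 else 1 / (real y - real x))
          - (\<Sum>y<M + (x+1). 1 / od y) + (\<Sum>y<M + (x+1). if y = x then 1 / od x else 0))"
      by (simp only: e_eq sum_distrib_left[symmetric] sum.distrib sum_subtractf)
    also have "(\<Sum>y<M + (x+1). if y = x then 0 else 1 / (real y - real x)) = harm M - harm x"
      using harmC2[of x M] by (simp add: add_ac)
    also have "(\<Sum>y<M + (x+1). 1 / od y) = harm (2 * (M + (x+1))) - harm (M + (x+1)) / 2"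
      by (rule harmC4)
    also have "(\<Sum>y<M + (x+1). if y = x then 1 / od x else 0) = 1 / od x"
      by (simp add: sum.delta)
    also have "2 * (M + (x+1)) = 2*M + 2*(x+1)" by simp
    finally have eq: "(\<Sum>y<M + (x+1). e y) = 1 / od x * (1 / 2 * (harm M - harm x) -
      (harm (2 * M + 2 * (x + 1)) - harm (M + (x + 1)) / 2) + 1 / od x)" .
    show ?thesis by (rule trans[OF eq]) (simp add: field_simps)
  qed
  have "(\<lambda>M. (1 / od x) * ((harm M / 2 + harm (M + (x+1)) / 2 - harm (2*M + 2*(x+1)))
       - harm x / 2 + 1 / od x)) \<longlonglongrightarrow> (1 / od x) * (- ln 2 - harm x / 2 + 1 / od x)"
    by (intro tendsto_intros harm_limln2)
  then have "(\<lambda>M. \<Sum>y<M + (x+1). e y) \<longlonglongrightarrow> (1 / od x) * (- ln 2 - harm x / 2 + 1 / od x)"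
    by (simp only: ps)
  then have "(\<lambda>N. \<Sum>y<N. e y) \<longlonglongrightarrow> (1 / od x) * (- ln 2 - harm x / 2 + 1 / od x)" by (rule LIMSEQ_offset)
  then show ?thesis by (simp add: sums_def e_def)
qed

lemma geom_tel:
  fixes u v :: real
  assumes "a \<le> Suc b" "b \<le> n"
  shows "(u - v) * (\<Sum>t=a..b. u^t * v^(n - t)) = u^(Suc b) * v^(n - b) - u^a * v^(Suc n - a)"
proof -
  define h where "h t = u^t * v^(Suc n - t)" for t
  have "(u - v) * (\<Sum>t=a..b. u^t * v^(n - t)) = (\<Sum>t=a..b. h (Suc t) - h t)"
    unfolding sum_distrib_left
  proof (rule sum.cong[OF refl])
    fix t assume "t \<in> {a..b}"
    then have "t \<le> n" using assms by simp
    then have "Suc n - t = Suc (n - t)" by simp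
    then show "(u - v) * (u ^ t * v ^ (n - t)) = h (Suc t) - h t"
      by (simp add: h_def algebra_simps)
  qed
  also have "\<dots> = h (Suc b) - h a" by (rule sum_Suc_diff[OF assms(1)])
  finally show ?thesis by (simp add: h_def)
qed

lemma od_diff_abs: "x \<noteq> y \<Longrightarrow> \<bar>od y - od x\<bar> \<ge> 2"
proof -
  assume "x \<noteq> y"
  then have "\<bar>real y - real x\<bar> \<ge> 1" by (cases "x < y") auto
  moreover have "od y - od x = 2 * (real y - real x)" by (simp add: od_def)
  ultimately show ?thesis by (simp add: abs_mult)
qed

lemma sqrt_le_self: "(p::real) \<ge> 1 \<Longrightarrow> sqrt p \<le> p"
proof -
  assume p: "p \<ge> 1"
  then have s1: "sqrt p \<ge> 1" by simp
  have "sqrt p * 1 \<le> sqrt p * sqrt p" using s1 by (intro mult_left_mono) auto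
  also have "\<dots> = p" using p by simp
  finally show ?thesis by simp
qed

lemma boundA_core:
  fixes p q :: real
  assumes p: "p \<ge> 1" and q: "q \<ge> 1" and d: "\<bar>p - q\<bar> \<ge> 2"
  shows "sqrt p \<le> 2 * sqrt q * \<bar>p - q\<bar>"
proof (cases "p \<le> 4 * q")
  case True
  then have "sqrt p \<le> sqrt (4 * q)" by (rule real_sqrt_le_mono)
  also have "\<dots> = 2 * sqrt q" by (simp add: real_sqrt_mult)
  also have "\<dots> \<le> 2 * sqrt q * \<bar>p - q\<bar>"
  proof -
    have "2 * sqrt q * 1 \<le> 2 * sqrt q * \<bar>p - q\<bar>" using d q by (intro mult_left_mono) auto
    then show ?thesis by simp
  qed
  finally show ?thesis .
next
  case False
  have sq: "sqrt q \<ge> 1" using q by simp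
  have sp: "sqrt p \<le> p" using p by (rule sqrt_le_self)
  have a: "\<bar>p - q\<bar> \<ge> p / 2" using False q by linarith
  have "2 * 1 * (p / 2) \<le> 2 * sqrt q * \<bar>p - q\<bar>" using sq a p
    by (intro mult_mono) auto
  then show ?thesis using sp by linarith
qed

lemma boundB_core:
  fixes p q :: real
  assumes p: "p \<ge> 1" and q: "q \<ge> 1" and d: "\<bar>p - q\<bar> \<ge> 2"
  shows "p * sqrt p \<le> 2 * sqrt q * \<bar>p^2 - q^2\<bar>"
proof -
  have sq: "sqrt q \<ge> 1" using q by simp
  have f0: "p^2 - q^2 = (p - q) * (p + q)" by (simp add: power2_eq_square algebra_simps)
  have f: "\<bar>p^2 - q^2\<bar> = \<bar>p - q\<bar> * (p + q)" using p q by (simp only: f0 abs_mult)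
  show ?thesis
  proof (cases "p \<le> 16 * q")
    case True
    then have "sqrt p \<le> sqrt (16 * q)" by (rule real_sqrt_le_mono)
    also have "\<dots> = 4 * sqrt q" by (simp add: real_sqrt_mult)
    finally have a: "sqrt p \<le> 4 * sqrt q" .
    have "p * sqrt p \<le> p * (4 * sqrt q)" using a p by (intro mult_left_mono) auto
    also have "\<dots> = 2 * sqrt q * (2 * p)" by simp
    also have "\<dots> \<le> 2 * sqrt q * (\<bar>p - q\<bar> * (p + q))"
    proof (intro mult_left_mono)
      show "2 * p \<le> \<bar>p - q\<bar> * (p + q)"
        using mult_mono[OF d, of p "p + q"] p q by simp
    qed (use sq in auto)
    finally show ?thesis by (simp only: f)
  next
    case False
    have sp: "sqrt p \<le> p" using p by (rule sqrt_le_self)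
    have a: "\<bar>p - q\<bar> \<ge> p / 2" using False q by linarith
    have c: "(p / 2) * p \<le> \<bar>p - q\<bar> * (p + q)" by (rule mult_mono[OF a]) (use p q in auto)
    have b: "(2 * 1) * ((p / 2) * p) \<le> (2 * sqrt q) * (\<bar>p - q\<bar> * (p + q))"
      by (rule mult_mono[OF _ c]) (use sq p in auto)
    have "p * sqrt p \<le> p * p" using sp p by (intro mult_left_mono) auto
    with b show ?thesis by (simp only: f)
  qed
qed

definition Bq :: "nat \<Rightarrow> real" where "Bq y = 1 / (od y * sqrt (od y))"

lemma Bq_nonneg: "Bq y \<ge> 0" by (simp add: Bq_def)

lemma Bq_summable: "Bq summable_on UNIV"
  using od_powr32_summable by (simp add: Bq_def[abs_def])

lemma boundA: "x \<noteq> y \<Longrightarrow> \<bar>1 / (od y * (od y - od x))\<bar> \<le> 2 * sqrt (od x) * Bq y"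
proof -
  assume xy: "x \<noteq> y"
  define p where "p = od y"
  define q where "q = od x"
  have p: "p \<ge> 1" and q: "q \<ge> 1" by (auto simp: p_def q_def od_ge1)
  have d: "\<bar>p - q\<bar> \<ge> 2" using od_diff_abs[OF xy] by (simp add: p_def q_def)
  have core: "sqrt p \<le> 2 * sqrt q * \<bar>p - q\<bar>" by (rule boundA_core[OF p q d])
  have sp: "sqrt p > 0" using p by simp
  have dp: "\<bar>p - q\<bar> > 0" using d by simp
  have "p * sqrt p \<le> p * (2 * sqrt q * \<bar>p - q\<bar>)" using core p by (intro mult_left_mono) auto
  then have "1 / (p * \<bar>p - q\<bar>) \<le> 2 * sqrt q * (1 / (p * sqrt p))"
    using p sp dp by (simp add: field_simps)
  then show ?thesis by (simp add: p_def q_def Bq_def abs_mult)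
qed

lemma boundB: "x \<noteq> y \<Longrightarrow> \<bar>1 / (od y ^ 2 - od x ^ 2)\<bar> \<le> 2 * sqrt (od x) * Bq y"
proof -
  assume xy: "x \<noteq> y"
  define p where "p = od y"
  define q where "q = od x"
  have p: "p \<ge> 1" and q: "q \<ge> 1" by (auto simp: p_def q_def od_ge1)
  have d: "\<bar>p - q\<bar> \<ge> 2" using od_diff_abs[OF xy] by (simp add: p_def q_def)
  have core: "p * sqrt p \<le> 2 * sqrt q * \<bar>p^2 - q^2\<bar>" by (rule boundB_core[OF p q d])
  have sp: "sqrt p > 0" using p by simp
  have e: "p^2 - q^2 = (p - q) * (p + q)" by (simp add: power2_eq_square algebra_simps)
  have "\<bar>p^2 - q^2\<bar> = \<bar>p - q\<bar> * (p + q)"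
    unfolding e abs_mult using p q by simp
  then have dp: "\<bar>p^2 - q^2\<bar> > 0" using d p q by simp
  have "1 / \<bar>p^2 - q^2\<bar> \<le> 2 * sqrt q * (1 / (p * sqrt p))"
    using core p sp dp by (simp add: field_simps)
  then show ?thesis by (simp add: p_def q_def Bq_def)
qed

lemma sqrt_pow_le: "m \<ge> 2 \<Longrightarrow> sqrt (od x) * (1 / od x ^ m) \<le> Bq x"
proof -
  assume m: "m \<ge> 2"
  have q: "od x \<ge> 1" by (rule od_ge1)
  have "od x ^ 2 \<le> od x ^ m" using q m by (intro power_increasing) auto
  then have "1 / od x ^ m \<le> 1 / od x ^ 2" by (intro divide_left_mono) auto
  then have "sqrt (od x) * (1 / od x ^ m) \<le> sqrt (od x) * (1 / od x ^ 2)"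
    by (intro mult_left_mono) auto
  also have "sqrt (od x) * (1 / od x ^ 2) = Bq x"
  proof -
    have s: "sqrt (od x) * sqrt (od x) = od x" by simp
    have sp: "sqrt (od x) > 0" by simp
    show ?thesis unfolding Bq_def using sp
      by (simp add: power2_eq_square field_simps)
  qed
  finally show ?thesis .
qed

lemma row_summable:
  assumes "\<And>y. x \<noteq> y \<Longrightarrow> \<bar>h y\<bar> \<le> 2 * sqrt (od x) * Bq y"
  shows "(h :: nat \<Rightarrow> real) summable_on (-{x})"
proof -
  have "(\<lambda>y. 2 * sqrt (od x) * Bq y) summable_on (-{x})"
    by (intro summable_on_cmult_right summable_on_subset[OF Bq_summable]) auto
  then have "(\<lambda>y. norm (h y)) summable_on (-{x})"
  proof (rule Infinite_Sum.abs_summable_on_comparison_test')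
    fix y assume "y \<in> -{x}"
    then have "x \<noteq> y" by auto
    then show "norm (h y) \<le> 2 * sqrt (od x) * Bq y" using assms by simp
  qed
  then show ?thesis by (rule summable_on_iff_abs_summable_on_real[THEN iffD2])
qed

lemma off_summable:
  assumes m: "m \<ge> 2" and hb: "\<And>x y. x \<noteq> y \<Longrightarrow> \<bar>h x y\<bar> \<le> 2 * sqrt (od x) * Bq y"
  shows "(\<lambda>(x,y). 1 / od x ^ m * (h x y :: real)) summable_on {(x,y). x \<noteq> y}"
proof -
  have "(\<lambda>(x,y). (2 * Bq x) * Bq y) summable_on UNIV"
    by (rule prod_summable) (auto intro: summable_on_cmult_right Bq_summable simp: Bq_nonneg)
  then have s: "(\<lambda>(x,y). (2 * Bq x) * Bq y) summable_on {(x,y). x \<noteq> y}"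
    by (rule summable_on_subset) auto
  have "(\<lambda>z. norm ((\<lambda>(x,y). 1 / od x ^ m * h x y) z)) summable_on {(x,y). x \<noteq> y}"
  proof (rule Infinite_Sum.abs_summable_on_comparison_test'[OF s])
    fix z assume "z \<in> {(x::nat, y::nat). x \<noteq> y}"
    then obtain x y where z: "z = (x,y)" "x \<noteq> y" by auto
    have "\<bar>1 / od x ^ m * h x y\<bar> = (1 / od x ^ m) * \<bar>h x y\<bar>" by (simp add: abs_mult)
    also have "\<dots> \<le> (1 / od x ^ m) * (2 * sqrt (od x) * Bq y)"
      using hb[OF z(2)] by (intro mult_left_mono) auto
    also have "\<dots> = 2 * (sqrt (od x) * (1 / od x ^ m)) * Bq y" by simp
    also have "\<dots> \<le> 2 * Bq x * Bq y"
      using sqrt_pow_le[OF m, of x] Bq_nonneg[of y] by (intro mult_right_mono) auto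
    finally show "norm ((\<lambda>(x,y). 1 / od x ^ m * h x y) z) \<le> (\<lambda>(x,y). (2 * Bq x) * Bq y) z"
      by (simp add: z)
  qed
  then show ?thesis by (rule summable_on_iff_abs_summable_on_real[THEN iffD2])
qed

lemma geoB:
  fixes P Q :: real
  assumes P: "P > 0" and Q: "Q > 0" and PQ: "P \<noteq> Q" and K: "K \<ge> 2"
  shows "(\<Sum>t=1..K-1. 1 / P ^ t * (1 / Q ^ (K - t))) =
         1 / P ^ (K - 1) * (1 / (Q - P)) + 1 / Q ^ (K - 1) * (1 / (P - Q))"
proof -
  obtain j where j: "K = Suc j" using K by (cases K) auto
  define S where "S = (\<Sum>t=1..K-1. 1 / P ^ t * (1 / Q ^ (K - t)))"
  have S': "S = (\<Sum>t=1..K-1. (1/P) ^ t * (1/Q) ^ (K - t))"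
    unfolding S_def by (simp add: power_one_over)
  have "(1/P - 1/Q) * (\<Sum>t=1..K-1. (1/P) ^ t * (1/Q) ^ (K - t)) =
        (1/P) ^ Suc (K-1) * (1/Q) ^ (K - (K-1)) - (1/P) ^ 1 * (1/Q) ^ (Suc K - 1)"
    by (rule geom_tel) (use K in auto)
  then have h: "(1/P - 1/Q) * S = (1/P) ^ Suc j * (1/Q) - (1/P) * (1/Q) ^ Suc j"
    by (simp add: S' j)
  have d: "1/P - 1/Q \<noteq> 0" using P Q PQ by (simp add: field_simps)
  have "S = ((1/P) ^ Suc j * (1/Q) - (1/P) * (1/Q) ^ Suc j) / (1/P - 1/Q)"
    using h d by (simp add: field_simps)
  also have "\<dots> = 1 / P ^ j * (1 / (Q - P)) + 1 / Q ^ j * (1 / (P - Q))"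
  proof -
    define a where "a = P ^ j"
    define b where "b = Q ^ j"
    have a: "a > 0" and b: "b > 0" using P Q by (auto simp: a_def b_def)
    have qp: "Q - P \<noteq> 0" using PQ by auto
    have n: "(1/P) ^ Suc j * (1/Q) - (1/P) * (1/Q) ^ Suc j = (b - a) / (P*Q*a*b)"
      unfolding power_one_over power_Suc a_def[symmetric] b_def[symmetric]
      using P Q a b by (simp add: field_simps)
    have dd: "1/P - 1/Q = (Q - P) / (P*Q)" using P Q by (simp add: field_simps)
    define c where "c = Q - P"
    have c: "c \<noteq> 0" using qp by (simp add: c_def)
    have pq: "P - Q = - c" by (simp add: c_def)
    have "((b - a) / (P*Q*a*b)) / (c / (P*Q)) = (b - a) / (a*b*c)"
      using P Q a b c by (simp add: field_simps)
    also have "\<dots> = 1 / a * (1 / c) + 1 / b * (1 / (- c))"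
      using a b c by (simp add: field_simps)
    finally have "((b - a) / (P*Q*a*b)) / ((Q - P) / (P*Q)) = 1 / a * (1 / (Q - P)) + 1 / b * (1 / (P - Q))"
      by (simp only: c_def pq)
    then show ?thesis by (simp only: n dd a_def b_def)
  qed
  finally show ?thesis by (simp add: S_def j)
qed

lemma stepB:
  assumes K: "K \<ge> 2"
  shows "(\<Sum>t=1..K-1. dirichlet_lambda (real (2*t)) * dirichlet_lambda (real (2*K - 2*t)))
         = (real K - 1/2) * dirichlet_lambda (real (2*K))"
proof -
  define T where "T = (\<Sum>t=1..K-1. dirichlet_lambda (real (2*t)) * dirichlet_lambda (real (2*K - 2*t)))"
  define LK where "LK = dirichlet_lambda (real (2*K))"
  define g :: "nat \<times> nat \<Rightarrow> real"
    where "g = (\<lambda>z. \<Sum>t\<in>{1..K-1}. (\<lambda>(x,y). 1 / od x ^ (2*t) * (1 / od y ^ (2*K - 2*t))) z)"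
  define G :: "nat \<times> nat \<Rightarrow> real"
    where "G = (\<lambda>(x,y). 1 / od x ^ (2*K-2) * (1 / (od y ^ 2 - od x ^ 2)))"
  define r where "r x = 1 / od x ^ (2*K-2) * (1 / (4 * od x ^ 2))" for x
  have gT: "(g has_sum T) UNIV"
    unfolding g_def T_def
  proof (rule has_sum_sum_fin)
    fix t assume t: "t \<in> {1..K-1}"
    show "((\<lambda>(x,y). 1 / od x ^ (2*t) * (1 / od y ^ (2*K - 2*t))) has_sum
          dirichlet_lambda (real (2*t)) * dirichlet_lambda (real (2*K - 2*t))) UNIV"
      by (rule prod_has_sum[OF lam_has_sum lam_has_sum]) (use t in auto)
  qed simp
  have gd: "g (x,x) = real (K-1) * (1 / od x ^ (2*K))" for x
  proof -
    have "g (x,x) = (\<Sum>t\<in>{1..K-1}. 1 / od x ^ (2*K))"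
      unfolding g_def
    proof (rule sum.cong[OF refl])
      fix t assume t: "t \<in> {1..K-1}"
      then have "2*K = 2*t + (2*K - 2*t)" by auto
      then have "od x ^ (2*K) = od x ^ (2*t) * od x ^ (2*K - 2*t)" by (metis power_add)
      then show "(\<lambda>(x,y). 1 / od x ^ (2*t) * (1 / od y ^ (2*K - 2*t))) (x,x) = 1 / od x ^ (2*K)"
        by simp
    qed
    then show ?thesis by simp
  qed
  have dD: "((\<lambda>x. real (K-1) * (1 / od x ^ (2*K))) has_sum (real (K-1) * LK)) UNIV"
    unfolding LK_def by (rule has_sum_cmult_right[OF lam_has_sum]) (use K in auto)
  have gF: "g (x,y) = G (x,y) + G (y,x)" if xy: "x \<noteq> y" for x y
  proof -
    have P: "od x ^ 2 > 0" and Q: "od y ^ 2 > 0" by auto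
    have PQ: "od x ^ 2 \<noteq> od y ^ 2"
    proof
      assume "od x ^ 2 = od y ^ 2"
      then have "od x = od y" using od_pos[of x] od_pos[of y] by (simp add: power2_eq_iff)
      then show False using xy by (simp add: od_def)
    qed
    have "g (x,y) = (\<Sum>t=1..K-1. 1 / (od x ^ 2) ^ t * (1 / (od y ^ 2) ^ (K - t)))"
      unfolding g_def
    proof (rule sum.cong[OF refl])
      fix t assume t: "t \<in> {1..K-1}"
      have "2*K - 2*t = 2 * (K - t)" by simp
      then show "(\<lambda>(x,y). 1 / od x ^ (2*t) * (1 / od y ^ (2*K - 2*t))) (x,y) =
                 1 / (od x ^ 2) ^ t * (1 / (od y ^ 2) ^ (K - t))"
        by (simp add: power_mult)
    qed
    also have "\<dots> = 1 / (od x ^ 2) ^ (K - 1) * (1 / (od y ^ 2 - od x ^ 2)) +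
                     1 / (od y ^ 2) ^ (K - 1) * (1 / (od x ^ 2 - od y ^ 2))"
      by (rule geoB[OF P Q PQ K])
    also have "\<dots> = G (x,y) + G (y,x)"
    proof -
      have "2*K - 2 = 2 * (K - 1)" by simp
      then show ?thesis by (simp add: G_def power_mult)
    qed
    finally show ?thesis .
  qed
  have Fs: "G summable_on {(x,y). x \<noteq> y}"
    unfolding G_def by (rule off_summable) (use K boundB in auto)
  have rows: "((\<lambda>y. G (x,y)) has_sum r x) (-{x})" for x
  proof -
    have "((\<lambda>y. 1 / (od y ^ 2 - od x ^ 2)) has_sum (1 / (4 * od x ^ 2))) (-{x})"
      by (rule row_has_sum[OF row_summable rowB_sums]) (rule boundB)
    from has_sum_cmult_right[OF this, of "1 / od x ^ (2*K-2)"]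
    show ?thesis by (simp add: G_def r_def)
  qed
  have rs: "(r has_sum ((T - real (K-1) * LK) / 2)) UNIV"
    by (rule sym_split[OF gT gd dD gF Fs rows])
  have r_eq: "r x = 1/4 * (1 / od x ^ (2*K))" for x
  proof -
    have "2*K = (2*K-2) + 2" using K by simp
    then have "od x ^ (2*K) = od x ^ (2*K-2) * od x ^ 2" by (metis power_add)
    then show ?thesis by (simp add: r_def)
  qed
  have "(r has_sum (1/4 * LK)) UNIV"
    unfolding r_eq LK_def by (rule has_sum_cmult_right[OF lam_has_sum]) (use K in auto)
  with rs have "(T - real (K-1) * LK) / 2 = 1/4 * LK" using has_sum_unique by blast
  then have "T = real (K-1) * LK + LK / 2" by (simp add: field_simps)
  also have "\<dots> = (real K - 1/2) * LK" using K by (simp add: of_nat_diff field_simps)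
  finally show ?thesis by (simp add: T_def LK_def)
qed

lemma has_sum_diff':
  fixes f g :: "'a \<Rightarrow> real"
  assumes "(f has_sum a) A" "(g has_sum b) A"
  shows "((\<lambda>x. f x - g x) has_sum (a - b)) A"
proof -
  have "((\<lambda>x. - g x) has_sum (- b)) A" using assms(2) by (simp add: has_sum_uminus)
  from has_sum_add[OF assms(1) this] show ?thesis by simp
qed

lemma geoA:
  fixes p q :: real
  assumes P: "p > 0" and Q: "q > 0" and PQ: "p \<noteq> q" and s: "s \<ge> 3"
  shows "(\<Sum>i=2..s-1. 1 / p ^ i * (1 / q ^ (s + 1 - i))) =
         1 / p ^ (s - 1) * (1 / (q * (q - p))) + 1 / q ^ (s - 1) * (1 / (p * (p - q)))"
proof -
  define j where "j = s - 2"
  have j: "s = j + 2" using s by (simp add: j_def)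
  define S where "S = (\<Sum>i=2..s-1. 1 / p ^ i * (1 / q ^ (s + 1 - i)))"
  have S': "S = (\<Sum>i=2..s-1. (1/p) ^ i * (1/q) ^ (s + 1 - i))"
    unfolding S_def by (simp add: power_one_over)
  have "(1/p - 1/q) * (\<Sum>i=2..s-1. (1/p) ^ i * (1/q) ^ (s + 1 - i)) =
        (1/p) ^ Suc (s-1) * (1/q) ^ (s + 1 - (s-1)) - (1/p) ^ 2 * (1/q) ^ (Suc (s + 1) - 2)"
    by (rule geom_tel) (use s in auto)
  then have h: "(1/p - 1/q) * S = (1/p) ^ (j+2) * (1/q) ^ 2 - (1/p) ^ 2 * (1/q) ^ (j+2)"
    by (simp add: S' j)
  have d: "1/p - 1/q \<noteq> 0" using P Q PQ by (simp add: field_simps)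
  have "S = ((1/p) ^ (j+2) * (1/q) ^ 2 - (1/p) ^ 2 * (1/q) ^ (j+2)) / (1/p - 1/q)"
    using h d by (simp add: field_simps)
  also have "\<dots> = 1 / p ^ (j+1) * (1 / (q * (q - p))) + 1 / q ^ (j+1) * (1 / (p * (p - q)))"
  proof -
    define a where "a = p ^ j"
    define b where "b = q ^ j"
    have a: "a > 0" and b: "b > 0" using P Q by (auto simp: a_def b_def)
    have qp: "q - p \<noteq> 0" using PQ by auto
    have n: "(1/p) ^ (j+2) * (1/q) ^ 2 - (1/p) ^ 2 * (1/q) ^ (j+2) = (b - a) / (p*p*q*q*a*b)"
      unfolding power_one_over power_add a_def[symmetric] b_def[symmetric]
      using P Q a b by (simp add: field_simps power2_eq_square)
    have pa: "p ^ (j+1) = p * a" and qb: "q ^ (j+1) = q * b" by (simp_all add: a_def b_def)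
    have dd: "1/p - 1/q = (q - p) / (p*q)" using P Q by (simp add: field_simps)
    define c where "c = q - p"
    have c: "c \<noteq> 0" using qp by (simp add: c_def)
    have pq: "p - q = - c" by (simp add: c_def)
    have "((b - a) / (p*p*q*q*a*b)) / (c / (p*q)) = (b - a) / (p*q*a*b*c)"
      using P Q a b c by (simp add: field_simps)
    also have "\<dots> = 1 / (p * a) * (1 / (q * c)) + 1 / (q * b) * (1 / (p * (- c)))"
      using P Q a b c by (simp add: field_simps)
    finally have "((b - a) / (p*p*q*q*a*b)) / ((q - p) / (p*q)) =
       1 / p ^ (j+1) * (1 / (q * (q - p))) + 1 / q ^ (j+1) * (1 / (p * (p - q)))"
      by (simp only: c_def pq pa qb)
    then show ?thesis by (simp only: n dd)
  qed
  finally show ?thesis by (simp add: S_def j)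
qed

lemma stepA:
  assumes s: "s \<ge> 3"
  shows "((\<lambda>k. harm k / od k ^ s) has_sum
          (real s * dirichlet_lambda (real (s+1)) - 2 * ln 2 * dirichlet_lambda (real s)
           - (\<Sum>i=2..s-1. dirichlet_lambda (real i) * dirichlet_lambda (real (s + 1 - i))))) UNIV"
proof -
  define T where "T = (\<Sum>i=2..s-1. dirichlet_lambda (real i) * dirichlet_lambda (real (s + 1 - i)))"
  define LW where "LW = dirichlet_lambda (real (s+1))"
  define LS where "LS = dirichlet_lambda (real s)"
  define g :: "nat \<times> nat \<Rightarrow> real"
    where "g = (\<lambda>z. \<Sum>i\<in>{2..s-1}. (\<lambda>(x,y). 1 / od x ^ i * (1 / od y ^ (s + 1 - i))) z)"
  define G :: "nat \<times> nat \<Rightarrow> real"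
    where "G = (\<lambda>(x,y). 1 / od x ^ (s-1) * (1 / (od y * (od y - od x))))"
  define r where "r x = 1 / od x ^ (s-1) * ((1 / od x) * (- ln 2 - harm x / 2 + 1 / od x))" for x
  have gT: "(g has_sum T) UNIV"
    unfolding g_def T_def
  proof (rule has_sum_sum_fin)
    fix i assume i: "i \<in> {2..s-1}"
    show "((\<lambda>(x,y). 1 / od x ^ i * (1 / od y ^ (s + 1 - i))) has_sum
          dirichlet_lambda (real i) * dirichlet_lambda (real (s + 1 - i))) UNIV"
      by (rule prod_has_sum[OF lam_has_sum lam_has_sum]) (use i in auto)
  qed simp
  have gd: "g (x,x) = real (s-2) * (1 / od x ^ (s+1))" for x
  proof -
    have "g (x,x) = (\<Sum>i\<in>{2..s-1}. 1 / od x ^ (s+1))"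
      unfolding g_def
    proof (rule sum.cong[OF refl])
      fix i assume i: "i \<in> {2..s-1}"
      then have "s+1 = i + (s + 1 - i)" by auto
      then have "od x ^ (s+1) = od x ^ i * od x ^ (s + 1 - i)" by (metis power_add)
      then show "(\<lambda>(x,y). 1 / od x ^ i * (1 / od y ^ (s + 1 - i))) (x,x) = 1 / od x ^ (s+1)"
        by simp
    qed
    moreover have "card {2..s-1} = s - 2" by simp
    ultimately show ?thesis by simp
  qed
  have dD: "((\<lambda>x. real (s-2) * (1 / od x ^ (s+1))) has_sum (real (s-2) * LW)) UNIV"
    unfolding LW_def by (rule has_sum_cmult_right[OF lam_has_sum]) (use s in auto)
  have gF: "g (x,y) = G (x,y) + G (y,x)" if xy: "x \<noteq> y" for x y
  proof -
    have PQ: "od x \<noteq> od y" using xy by (simp add: od_def)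
    have "g (x,y) = (\<Sum>i=2..s-1. 1 / od x ^ i * (1 / od y ^ (s + 1 - i)))"
      unfolding g_def by simp
    also have "\<dots> = 1 / od x ^ (s - 1) * (1 / (od y * (od y - od x))) +
                     1 / od y ^ (s - 1) * (1 / (od x * (od x - od y)))"
      by (rule geoA[OF od_pos od_pos PQ s])
    also have "\<dots> = G (x,y) + G (y,x)" by (simp add: G_def)
    finally show ?thesis .
  qed
  have Fs: "G summable_on {(x,y). x \<noteq> y}"
    unfolding G_def by (rule off_summable) (use s boundA in auto)
  have rows: "((\<lambda>y. G (x,y)) has_sum r x) (-{x})" for x
  proof -
    have "((\<lambda>y. 1 / (od y * (od y - od x))) has_sum ((1 / od x) * (- ln 2 - harm x / 2 + 1 / od x))) (-{x})"
      by (rule row_has_sum[OF row_summable rowA_sums]) (rule boundA)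
    from has_sum_cmult_right[OF this, of "1 / od x ^ (s-1)"]
    show ?thesis by (simp add: G_def r_def)
  qed
  have rs: "(r has_sum ((T - real (s-2) * LW) / 2)) UNIV"
    by (rule sym_split[OF gT gd dD gF Fs rows])
  have h_eq: "harm x / od x ^ s = 2 * ((1 / od x ^ (s+1) - ln 2 * (1 / od x ^ s)) - r x)" for x
  proof -
    have e1: "od x ^ s = od x ^ (s-1) * od x" using s by (metis Suc_diff_1 le_trans numeral_3_eq_3 not_less_eq_eq
          power_Suc2 zero_less_Suc le_numeral_extra(3) less_le_not_le)
    have e2: "od x ^ (s+1) = od x ^ (s-1) * od x * od x" by (simp add: e1)
    show ?thesis unfolding r_def e2 e1 by (simp add: field_simps)
  qed
  have a: "((\<lambda>x. 1 / od x ^ (s+1) - ln 2 * (1 / od x ^ s)) has_sum (LW - ln 2 * LS)) UNIV"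
    unfolding LW_def LS_def
    by (intro has_sum_diff' has_sum_cmult_right lam_has_sum) (use s in auto)
  have c: "((\<lambda>x. 2 * ((1 / od x ^ (s+1) - ln 2 * (1 / od x ^ s)) - r x)) has_sum
        (2 * ((LW - ln 2 * LS) - (T - real (s-2) * LW) / 2))) UNIV"
    by (intro has_sum_cmult_right has_sum_diff' a rs)
  have val: "2 * ((LW - ln 2 * LS) - (T - real (s-2) * LW) / 2) = real s * LW - 2 * ln 2 * LS - T"
    using s by (simp add: of_nat_diff field_simps)
  have eqf: "(\<lambda>x. 2 * ((1 / od x ^ (s+1) - ln 2 * (1 / od x ^ s)) - r x)) = (\<lambda>x. harm x / od x ^ s)"
    by (rule ext) (simp only: h_eq)
  from c have "((\<lambda>x. harm x / od x ^ s) has_sum (real s * LW - 2 * ln 2 * LS - T)) UNIV"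
    by (simp only: eqf val)
  then show ?thesis by (simp only: T_def LW_def LS_def)
qed

lemma split_even_odd:
  fixes f :: "nat \<Rightarrow> real"
  shows "(\<Sum>i=2..2*(m+1). f i) = (\<Sum>k=1..m+1. f (2*k)) + (\<Sum>q=1..m. f (2*q+1))"
proof (induction m)
  case 0 then show ?case by simp
next
  case (Suc m)
  have e: "2 * (Suc m + 1) = Suc (Suc (2*(m+1)))" by simp
  have "(\<Sum>i=2..2*(Suc m+1). f i) = (\<Sum>i=2..2*(m+1). f i) + f (2*(m+1)+1) + f (2*(Suc m+1))"
    unfolding e by (simp add: sum.cl_ivl_Suc)
  also have "\<dots> = (\<Sum>k=1..m+1. f (2*k)) + (\<Sum>q=1..m. f (2*q+1)) + f (2*(m+1)+1) + f (2*(Suc m+1))"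
    by (simp only: Suc.IH)
  also have "\<dots> = (\<Sum>k=1..Suc m+1. f (2*k)) + (\<Sum>q=1..Suc m. f (2*q+1))"
    by (simp add: sum.cl_ivl_Suc)
  finally show ?case .
qed

lemma pair_sum:
  fixes g :: "nat \<Rightarrow> real"
  shows "(\<Sum>q=1..2*n. g q) = (\<Sum>q=1..n. g q) + (\<Sum>q=1..n. g (2*n+1-q))"
proof -
  have u: "{1..2*n} = {1..n} \<union> {n+1..2*n}" by auto
  have "(\<Sum>q=1..2*n. g q) = (\<Sum>q=1..n. g q) + (\<Sum>q=n+1..2*n. g q)"
    unfolding u by (rule sum.union_disjoint) auto
  also have "(\<Sum>q=n+1..2*n. g q) = (\<Sum>q=1..n. g (2*n+1-q))"
    by (rule sum.reindex_bij_witness[where i="\<lambda>q. 2*n+1-q" and j="\<lambda>q. 2*n+1-q"]) auto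
  finally show ?thesis .
qed

theorem mainTheorem4:
  fixes b :: nat
  assumes "b \<ge> 1"
  shows "(\<lambda>n. harm (n + 1) / (2 * real (n + 1) + 1) ^ (4 * b - 1)) sums
           (- 2 * dirichlet_lambda (real (4 * b - 1)) * ln 2
            + (2 * real b - 1 / 2) * dirichlet_lambda (real (4 * b))
            - 2 * (\<Sum>q = 1..b - 1. dirichlet_lambda (real (2 * q + 1))
                                   * dirichlet_lambda (real (4 * b - 2 * q - 1))))"
proof -
  define s where "s = 4 * b - 1"
  define dl where "dl m = dirichlet_lambda (real m)" for m
  define Q where "Q = (\<Sum>q = 1..b - 1. dl (2 * q + 1) * dl (4 * b - 2 * q - 1))"
  have s3: "s \<ge> 3" using assms by (simp add: s_def)
  have s1: "s + 1 = 4 * b" using assms by (simp add: s_def)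
  have s1': "Suc s = 4 * b" using assms by (simp add: s_def)
  have A: "((\<lambda>k. harm k / od k ^ s) has_sum
          (real s * dl (s+1) - 2 * ln 2 * dl s - (\<Sum>i=2..s-1. dl i * dl (s + 1 - i)))) UNIV"
    using stepA[OF s3] by (simp add: dl_def)
  define f where "f i = dl i * dl (s + 1 - i)" for i
  have sm: "s - 1 = 2 * ((2*b - 2) + 1)" using assms by (simp add: s_def)
  have T: "(\<Sum>i=2..s-1. dl i * dl (s + 1 - i)) =
           (\<Sum>k=1..(2*b-2)+1. f (2*k)) + (\<Sum>q=1..2*b-2. f (2*q+1))"
    unfolding sm f_def[symmetric] by (rule split_even_odd)
  have even: "(\<Sum>k=1..(2*b-2)+1. f (2*k)) = (real (2*b) - 1/2) * dl (4*b)"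
  proof -
    have "(\<Sum>k=1..(2*b-2)+1. f (2*k)) = (\<Sum>t=1..2*b-1. dl (2*t) * dl (2*(2*b) - 2*t))"
    proof (rule sum.cong)
      show "{1..2 * b - 2 + 1} = {1..2 * b - 1}" using assms by simp
    next
      fix t assume "t \<in> {1..2 * b - 1}"
      then show "f (2*t) = dl (2*t) * dl (2*(2*b) - 2*t)" by (simp add: f_def s1 s1')
    qed
    also have "\<dots> = (real (2*b) - 1/2) * dl (2*(2*b))"
      unfolding dl_def by (rule stepB) (use assms in simp)
    finally show ?thesis by simp
  qed
  have odd: "(\<Sum>q=1..2*b-2. f (2*q+1)) = 2 * Q"
  proof -
    have e: "2*b - 2 = 2 * (b - 1)" by simp
    have "(\<Sum>q=1..2*b-2. f (2*q+1)) = (\<Sum>q=1..b-1. f (2*q+1)) + (\<Sum>q=1..b-1. f (2*(2*(b-1)+1-q)+1))"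
      unfolding e by (rule pair_sum)
    also have "(\<Sum>q=1..b-1. f (2*q+1)) = Q"
      unfolding Q_def
    proof (rule sum.cong[OF refl])
      fix q assume "q \<in> {1..b-1}"
      then show "f (2*q+1) = dl (2 * q + 1) * dl (4 * b - 2 * q - 1)"
        by (simp add: f_def s1 s1')
    qed
    also have "(\<Sum>q=1..b-1. f (2*(2*(b-1)+1-q)+1)) = Q"
      unfolding Q_def
    proof (rule sum.cong[OF refl])
      fix q assume q: "q \<in> {1..b-1}"
      then have e1: "2*(2*(b-1)+1-q)+1 = 4 * b - 2 * q - 1" by auto
      have e2: "s + 1 - (4 * b - 2 * q - 1) = 2 * q + 1" using q s1 by auto
      show "f (2*(2*(b-1)+1-q)+1) = dl (2 * q + 1) * dl (4 * b - 2 * q - 1)"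
        unfolding e1 f_def e2 by simp
    qed
    finally show ?thesis by simp
  qed
  define X where "X = - 2 * dl s * ln 2 + (2 * real b - 1 / 2) * dl (4 * b) - 2 * Q"
  have val: "real s * dl (s+1) - 2 * ln 2 * dl s - (\<Sum>i=2..s-1. dl i * dl (s + 1 - i)) = X"
  proof -
    have rs: "real s = 4 * real b - 1" using assms by (simp add: s_def of_nat_diff)
    show ?thesis unfolding T even odd by (simp add: X_def s1 s1' rs algebra_simps)
  qed
  have "(\<lambda>k. harm k / od k ^ s) sums X" using A unfolding val by (rule has_sum_imp_sums)
  then have "(\<lambda>n. harm (Suc n) / od (Suc n) ^ s) sums X"
    by (subst sums_Suc_iff) (simp add: harm_expand(1))
  then show ?thesis by (simp add: od_def s_def X_def Q_def dl_def)
qed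

end
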